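(* Let $a_{12},a_{13},a_{23}\in C^\infty(\mathbb{R}^3)$ be nowhere-vanishing and suppose that $$\partial_1\!\left(\frac{a_{12}}{a_{13}}\right)=\partial_2\!\left(\frac{a_{12}}{a_{23}}\right)=\partial_3\!\left(\frac{a_{13}}{a_{23}}\right)=0 .$$ Then $F_1=a_{12}\,\partial_1\smile\partial_2+a_{13}\,\partial_1\smile\partial_3+a_{23}\,\partial_2\smile\partial_3$ is quasibasic: there exist smooth functions $f_1,f_2,f_3$, with $f_i$ depending only on $x_i$, and a smooth function $\varphi$ on $\mathbb{R}^3$ such that $a_{12}=\varphi f_1f_2$, $a_{13}=\varphi f_1f_3$, $a_{23}=\varphi f_2f_3$.
   Context: $\partial_i=\partial/\partial x_i$ on $C^\infty(\mathbb{R}^3)$ and $(f\smile g)(a,b)=f(a)g(b)$. An infinitesimal deformation of $C^\infty(\mathbb{R}^3)$ is called quasibasic if it equals $\varphi$ times a basic one, where a basic infinitesimal has the form $\sum_{i<j}c_{ij}f_i\partial_i\smile f_j\partial_j$ with real constants $c_{ij}$ and each $f_i$ a smooth function of $x_i$ alone. *)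

theory Defs
  imports "HOL-Analysis.Analysis"
begin

definition partial :: "'n::finite \<Rightarrow> (real^'n \<Rightarrow> real) \<Rightarrow> real^'n \<Rightarrow> real" where
  "partial i g x = deriv (\<lambda>t. g (x + t *\<^sub>R axis i 1)) 0"

fun iter_partial :: "'n::finite list \<Rightarrow> (real^'n \<Rightarrow> real) \<Rightarrow> real^'n \<Rightarrow> real" where
  "iter_partial [] g = g"
| "iter_partial (i # is) g = partial i (iter_partial is g)"

definition smooth :: "(real^'n::finite \<Rightarrow> real) \<Rightarrow> bool" where
  "smooth g \<longleftrightarrow> (\<forall>is. continuous_on UNIV (iter_partial is g) \<and>
      (\<forall>i x. (\<lambda>t. iter_partial is g (x + t *\<^sub>R axis i 1)) differentiable (at 0)))"

definition smooth1 :: "(real \<Rightarrow> real) \<Rightarrow> bool" where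
  "smooth1 f \<longleftrightarrow> (\<forall>n x. (deriv ^^ n) f differentiable (at x))"

end

theory Submission
  imports Defs
begin


lemma iter_partial_append: "iter_partial (is @ js) g = iter_partial is (iter_partial js g)"
  by (induction "is") auto

lemma smooth_partial: "smooth g \<Longrightarrow> smooth (partial i g)"
  unfolding smooth_def using iter_partial_append[of _ "[i]" g] by (metis iter_partial.simps)

lemma smooth_cont: "smooth g \<Longrightarrow> continuous_on UNIV g"
  unfolding smooth_def by (metis iter_partial.simps(1))

lemma smooth_line: "smooth g \<Longrightarrow> (\<lambda>t. g (x + t *\<^sub>R axis i 1)) differentiable (at 0)"
  unfolding smooth_def by (metis iter_partial.simps(1))

lemma line_deriv:
  fixes g :: "real^'n::finite \<Rightarrow> real"
  assumes "\<And>y. (\<lambda>t. g (y + t *\<^sub>R v)) differentiable (at 0)"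
  shows "((\<lambda>t. g (x + t *\<^sub>R v)) has_real_derivative deriv (\<lambda>t. g ((x + s *\<^sub>R v) + t *\<^sub>R v)) 0) (at s)"
proof -
  have "((\<lambda>t. g ((x + s *\<^sub>R v) + t *\<^sub>R v)) has_real_derivative deriv (\<lambda>t. g ((x + s *\<^sub>R v) + t *\<^sub>R v)) 0) (at 0)"
    using assms DERIV_deriv_iff_real_differentiable by blast
  moreover have "(\<lambda>t. g ((x + s *\<^sub>R v) + t *\<^sub>R v)) = (\<lambda>t. (\<lambda>t. g (x + t *\<^sub>R v)) (t + s))"
    by (auto simp: algebra_simps scaleR_add_left)
  ultimately show ?thesis using DERIV_shift[of "\<lambda>t. g (x + t *\<^sub>R v)" _ 0 s] by simp
qed

lemma partial_D:
  fixes g :: "real^'n::finite \<Rightarrow> real"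
  assumes "(\<lambda>t. g (x + t *\<^sub>R axis i 1)) differentiable (at 0)"
  shows "((\<lambda>t. g (x + t *\<^sub>R axis i 1)) has_real_derivative partial i g x) (at 0)"
  using assms DERIV_deriv_iff_real_differentiable unfolding partial_def by blast

inductive_set Alg :: "(real^'n::finite \<Rightarrow> real) set" where
  gen: "smooth g \<Longrightarrow> (\<lambda>x. g (x $ j *\<^sub>R axis j 1)) \<in> Alg"
| id: "smooth g \<Longrightarrow> g \<in> Alg"
| inv: "smooth a \<Longrightarrow> \<forall>x. a x \<noteq> 0 \<Longrightarrow> (\<lambda>x. inverse (a x)) \<in> Alg"
| invgen: "smooth a \<Longrightarrow> \<forall>x. a x \<noteq> 0 \<Longrightarrow> (\<lambda>x. inverse (a (x $ j *\<^sub>R axis j 1))) \<in> Alg"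
| const: "(\<lambda>x. c) \<in> Alg"
| add: "f \<in> Alg \<Longrightarrow> g \<in> Alg \<Longrightarrow> (\<lambda>x. f x + g x) \<in> Alg"
| mult: "f \<in> Alg \<Longrightarrow> g \<in> Alg \<Longrightarrow> (\<lambda>x. f x * g x) \<in> Alg"

lemma proj_line:
  fixes x :: "real^'n::finite"
  shows "(x + t *\<^sub>R axis i 1) $ j *\<^sub>R axis j 1 = (if i = j then x $ j *\<^sub>R axis j 1 + t *\<^sub>R axis j 1 else x $ j *\<^sub>R axis j 1)"
  by (auto simp: axis_def scaleR_add_left)

lemma cont_proj: "continuous_on UNIV (\<lambda>x::real^'n::finite. x $ j *\<^sub>R (axis j 1 :: real^'n))"
  by (intro continuous_on_scaleR continuous_on_const continuous_on_component continuous_on_id)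

lemma proj_eq:
  fixes x :: "real^'n::finite"
  shows "(x + t *\<^sub>R axis j 1) $ j *\<^sub>R axis j 1 = x $ j *\<^sub>R axis j 1 + t *\<^sub>R axis j 1"
  using proj_line[of x t j j] by simp

lemma proj_neq:
  fixes x :: "real^'n::finite"
  shows "i \<noteq> j \<Longrightarrow> (x + t *\<^sub>R axis i 1) $ j *\<^sub>R axis j 1 = x $ j *\<^sub>R axis j 1"
  using proj_line[of x t i j] by simp

lemma Alg_props:
  fixes g :: "real^'n::finite \<Rightarrow> real"
  assumes "g \<in> Alg"
  shows "continuous_on UNIV g \<and> (\<forall>i x. (\<lambda>t. g (x + t *\<^sub>R axis i 1)) differentiable (at 0)) \<and> (\<forall>i. partial i g \<in> Alg)"
  using assms
proof induction
  case (gen g j)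
  have c: "continuous_on UNIV (\<lambda>x::real^'n. g (x $ j *\<^sub>R axis j 1))"
    using continuous_on_compose[OF cont_proj[of j] continuous_on_subset[OF smooth_cont[OF gen] subset_UNIV]]
    by (simp add: o_def)
  have d: "(\<lambda>t. g ((x + t *\<^sub>R axis i 1) $ j *\<^sub>R axis j 1)) differentiable (at 0)" for i x
    using smooth_line[OF gen, of "x $ j *\<^sub>R axis j 1" j] by (cases "i = j") (simp_all only: proj_eq proj_neq differentiable_const not_False_eq_True simp_thms)
  have p: "partial i (\<lambda>x. g (x $ j *\<^sub>R axis j 1)) \<in> Alg" for i
  proof (cases "i = j")
    case True
    have "partial i (\<lambda>x. g (x $ j *\<^sub>R axis j 1)) = (\<lambda>x. partial j g (x $ j *\<^sub>R axis j 1))"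
      using True by (simp add: partial_def proj_line fun_eq_iff scaleR_add_left)
    then show ?thesis using Alg.gen[OF smooth_partial[OF gen]] by simp
  next
    case False
    have "partial i (\<lambda>x. g (x $ j *\<^sub>R axis j 1)) = (\<lambda>x. 0)"
      using False by (simp add: partial_def fun_eq_iff axis_def)
    then show ?thesis using Alg.const by metis
  qed
  show ?case using c d p by auto
next
  case (id g)
  then show ?case using smooth_cont smooth_line smooth_partial Alg.id by blast
next
  case (inv a)
  have c: "continuous_on UNIV (\<lambda>x. inverse (a x))"
    using inv by (intro continuous_intros smooth_cont) auto
  have D: "((\<lambda>t. inverse (a (x + t *\<^sub>R axis i 1))) has_real_derivative
      - (partial i a x * inverse (a x ^ Suc (Suc 0)))) (at 0)" for i x
    using DERIV_inverse_fun[OF partial_D[OF smooth_line[OF inv(1)]], of x i] inv(2) by simp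
  have p: "partial i (\<lambda>x. inverse (a x)) \<in> Alg" for i
  proof -
    have "partial i (\<lambda>x. inverse (a x)) = (\<lambda>x. (-1) * (partial i a x * (inverse (a x) * inverse (a x))))"
      by (rule ext, use DERIV_imp_deriv[OF D] in \<open>simp add: partial_def power2_eq_square\<close>)
    moreover have "(\<lambda>x. (-1) * (partial i a x * (inverse (a x) * inverse (a x)))) \<in> Alg"
      by (intro Alg.mult Alg.const Alg.id Alg.inv smooth_partial inv)
    ultimately show ?thesis by simp
  qed
  show ?case using c D p real_differentiable_def by blast
next
  case (invgen a j)
  define b where "b = (\<lambda>x::real^'n. a (x $ j *\<^sub>R axis j 1))"
  have c: "continuous_on UNIV (\<lambda>x. inverse (b x))"
  proof -
    have "continuous_on UNIV b" unfolding b_def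
      using continuous_on_compose[OF cont_proj[of j] continuous_on_subset[OF smooth_cont[OF invgen(1)] subset_UNIV]]
      by (simp add: o_def)
    then show ?thesis using invgen(2) unfolding b_def by (intro continuous_intros) auto
  qed
  have D: "((\<lambda>t. inverse (b (x + t *\<^sub>R axis i 1))) has_real_derivative
      (if i = j then - (partial j a (x $ j *\<^sub>R axis j 1) * inverse (b x ^ Suc (Suc 0))) else 0)) (at 0)" for i x
  proof (cases "i = j")
    case True
    then show ?thesis
      using DERIV_inverse_fun[OF partial_D[OF smooth_line[OF invgen(1)]], of "x $ j *\<^sub>R axis j 1" j] invgen(2)
      by (simp add: b_def proj_line scaleR_add_left)
  next
    case False
    then show ?thesis by (simp add: b_def axis_def)
  qed
  have p: "partial i (\<lambda>x. inverse (b x)) \<in> Alg" for i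
  proof (cases "i = j")
    case True
    have "partial i (\<lambda>x. inverse (b x)) = (\<lambda>x. (-1) * (partial j a (x $ j *\<^sub>R axis j 1) * (inverse (a (x $ j *\<^sub>R axis j 1)) * inverse (a (x $ j *\<^sub>R axis j 1)))))"
      by (rule ext, use DERIV_imp_deriv[OF D] True in \<open>simp add: partial_def power2_eq_square, simp add: b_def\<close>)
    moreover have "(\<lambda>x. (-1) * (partial j a (x $ j *\<^sub>R axis j 1) * (inverse (a (x $ j *\<^sub>R axis j 1)) * inverse (a (x $ j *\<^sub>R axis j 1))))) \<in> Alg"
      by (intro Alg.mult Alg.const Alg.gen Alg.invgen smooth_partial invgen)
    ultimately show ?thesis by simp
  next
    case False
    have "partial i (\<lambda>x. inverse (b x)) = (\<lambda>x. 0)"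
      by (rule ext, use DERIV_imp_deriv[OF D] False in \<open>simp add: partial_def b_def\<close>)
    then show ?thesis using Alg.const by metis
  qed
  show ?case using c D p real_differentiable_def unfolding b_def by blast
next
  case (const c)
  have "partial i (\<lambda>x::real^'n. c) = (\<lambda>x. 0)" for i by (rule ext) (simp add: partial_def DERIV_imp_deriv[OF DERIV_const])
  then show ?case using Alg.const by auto
next
  case (add f g)
  have D: "((\<lambda>t. f (x + t *\<^sub>R axis i 1) + g (x + t *\<^sub>R axis i 1)) has_real_derivative
      partial i f x + partial i g x) (at 0)" for i x
    using add by (intro DERIV_add partial_D) auto
  have "partial i (\<lambda>x. f x + g x) = (\<lambda>x. partial i f x + partial i g x)" for i
    by (rule ext, use DERIV_imp_deriv[OF D] in \<open>simp add: partial_def\<close>)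
  then show ?case using add D real_differentiable_def
    by (auto intro!: continuous_intros Alg.add)
next
  case (mult f g)
  have D: "((\<lambda>t. f (x + t *\<^sub>R axis i 1) * g (x + t *\<^sub>R axis i 1)) has_real_derivative
      partial i f x * g x + f x * partial i g x) (at 0)" for i x
    using DERIV_mult[OF partial_D[of f x i] partial_D[of g x i]] mult by (simp add: mult.commute)
  have "partial i (\<lambda>x. f x * g x) = (\<lambda>x. partial i f x * g x + f x * partial i g x)" for i
    by (rule ext, use DERIV_imp_deriv[OF D] in \<open>simp add: partial_def\<close>)
  then show ?case using mult D real_differentiable_def
    by (auto intro!: continuous_intros Alg.add Alg.mult)
qed

lemma Alg_smooth:
  assumes "g \<in> Alg" shows "smooth g"
proof -
  have "iter_partial is g \<in> Alg" for "is"
    using assms by (induction "is") (auto dest: Alg_props)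
  then show ?thesis unfolding smooth_def using Alg_props by blast
qed



lemma algK2:
  fixes t t0 r1 r2 z w :: real
  assumes "t / r1 = t0 / r2" "t0 \<noteq> 0" "r1 \<noteq> 0" "r2 \<noteq> 0" "t * z = t0 * w"
  shows "r1 * z = w * r2"
proof -
  have "t = t0 * r1 / r2" using assms by (simp add: field_simps)
  then have "t0 * (r1 * z / r2) = t0 * w" using assms(5) by (simp add: field_simps)
  then have "r1 * z / r2 = w" using assms(2) by (metis mult_left_cancel times_divide_eq_right)
  then show ?thesis using assms(4) by (simp add: field_simps)
qed

lemma algE:
  fixes A T3 R1 R2 d1 d2 d3 c :: real
  assumes "A \<noteq> 0" "T3 \<noteq> 0" "R1 \<noteq> 0" "R2 \<noteq> 0" "d1 \<noteq> 0" "d2 \<noteq> 0" "d3 \<noteq> 0"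
  defines "\<phi> \<equiv> A * (R2 * d2 * inverse d2) * (T3 * d3 * inverse d3)"
  defines "f1 \<equiv> R1 * d1 * inverse d1 * c"
  defines "f2 \<equiv> d2 * inverse (R2 * d2)"
  defines "f3 \<equiv> d3 * inverse (T3 * d3)"
  shows "T3 * R1 * c * A = \<phi> * f1 * f2 \<and> R1 * R2 * c * A = \<phi> * f1 * f3 \<and> A = \<phi> * f2 * f3"
  using assms unfolding \<phi>_def f1_def f2_def f3_def by (simp add: field_simps)

lemma line_const:
  fixes g :: "real^'n::finite \<Rightarrow> real"
  assumes "g \<in> Alg" "\<forall>x. partial i g x = 0"
  shows "g (x + t *\<^sub>R axis i 1) = g x"
proof -
  have d: "\<And>y. (\<lambda>t. g (y + t *\<^sub>R axis i 1)) differentiable (at 0)" using Alg_props[OF assms(1)] by blast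
  have "\<forall>s. ((\<lambda>t. g (x + t *\<^sub>R axis i 1)) has_real_derivative 0) (at s)"
  proof
    fix s
    show "((\<lambda>t. g (x + t *\<^sub>R axis i 1)) has_real_derivative 0) (at s)"
      using line_deriv[OF d, of x s] assms(2) unfolding partial_def by metis
  qed
  from DERIV_isconst_all[OF this, of t 0] show ?thesis by simp
qed

lemma deriv_line:
  fixes g :: "real^'n::finite \<Rightarrow> real"
  assumes "g \<in> Alg"
  shows "((\<lambda>s. g (s *\<^sub>R axis i 1)) has_real_derivative partial i g (s *\<^sub>R axis i 1)) (at s)"
proof -
  have d: "\<And>y. (\<lambda>t. g (y + t *\<^sub>R axis i 1)) differentiable (at 0)" using Alg_props[OF assms(1)] by blast
  show ?thesis using line_deriv[OF d, of 0 s] unfolding partial_def by simp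
qed

lemma Alg_smooth1:
  fixes g :: "real^'n::finite \<Rightarrow> real"
  assumes "g \<in> Alg"
  shows "smooth1 (\<lambda>s. g (s *\<^sub>R axis i 1))"
proof -
  have "\<And>g. g \<in> Alg \<Longrightarrow> \<exists>h\<in>Alg. (deriv ^^ n) (\<lambda>s. g (s *\<^sub>R axis i 1)) = (\<lambda>s. h (s *\<^sub>R axis i 1))" for n
  proof (induction n)
    case 0 then show ?case by auto
  next
    case (Suc n)
    have "deriv (\<lambda>s. g (s *\<^sub>R axis i 1)) = (\<lambda>s. partial i g (s *\<^sub>R axis i 1))"
      using DERIV_imp_deriv[OF deriv_line[OF Suc.prems]] by (intro ext) blast
    moreover have "partial i g \<in> Alg" using Alg_props[OF Suc.prems] by blast
    ultimately show ?case using Suc.IH by (simp add: funpow_Suc_right del: funpow.simps)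
  qed
  then show ?thesis unfolding smooth1_def using assms deriv_line real_differentiable_def by metis
qed

definition mk :: "real \<Rightarrow> real \<Rightarrow> real \<Rightarrow> real^3" where
  "mk a b c = a *\<^sub>R axis 1 1 + b *\<^sub>R axis 2 1 + c *\<^sub>R axis 3 1"

lemma mk_eq: "x = mk (x$1) (x$2) (x$3)"
  by (simp add: mk_def vec_eq_iff forall_3 axis_def)

lemma mk_1: "mk a b c + t *\<^sub>R axis 1 1 = mk (a + t) b c"
  by (simp add: mk_def vec_eq_iff forall_3 axis_def)
lemma mk_2: "mk a b c + t *\<^sub>R axis 2 1 = mk a (b + t) c"
  by (simp add: mk_def vec_eq_iff forall_3 axis_def)
lemma mk_3: "mk a b c + t *\<^sub>R axis 3 1 = mk a b (c + t)"
  by (simp add: mk_def vec_eq_iff forall_3 axis_def)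
lemma mk_e1: "s *\<^sub>R axis 1 1 = mk s 0 0"
  by (simp add: mk_def vec_eq_iff forall_3 axis_def)
lemma mk_e2: "s *\<^sub>R axis 2 1 = mk 0 s 0"
  by (simp add: mk_def vec_eq_iff forall_3 axis_def)
lemma mk_e3: "s *\<^sub>R axis 3 1 = mk 0 0 s"
  by (simp add: mk_def vec_eq_iff forall_3 axis_def)
lemma mk_0: "(0::real^3) = mk 0 0 0"
  by (simp add: mk_def vec_eq_iff forall_3 axis_def)

theorem theorem8:
  fixes a12 a13 a23 :: "real^3 \<Rightarrow> real"
  assumes "smooth a12" and "smooth a13" and "smooth a23"
    and "\<forall>x. a12 x \<noteq> 0" and "\<forall>x. a13 x \<noteq> 0" and "\<forall>x. a23 x \<noteq> 0"
    and "\<forall>x. partial 1 (\<lambda>y. a12 y / a13 y) x = 0"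
    and "\<forall>x. partial 2 (\<lambda>y. a12 y / a23 y) x = 0"
    and "\<forall>x. partial 3 (\<lambda>y. a13 y / a23 y) x = 0"
  shows "\<exists>f1 f2 f3 :: real \<Rightarrow> real. \<exists>\<phi> :: real^3 \<Rightarrow> real.
           smooth1 f1 \<and> smooth1 f2 \<and> smooth1 f3 \<and> smooth \<phi> \<and>
           (\<forall>x. a12 x = \<phi> x * f1 (x$1) * f2 (x$2)) \<and>
           (\<forall>x. a13 x = \<phi> x * f1 (x$1) * f3 (x$3)) \<and>
           (\<forall>x. a23 x = \<phi> x * f2 (x$2) * f3 (x$3))"
proof -
  note nz = assms(4,5,6)
  define R where "R y = a13 y / a23 y" for y
  define T where "T y = a12 y / a23 y" for y
  define G where "G y = a12 y / a13 y" for y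
  have divA: "(\<lambda>y. u y / v y) \<in> Alg" if "smooth u" "smooth v" "\<forall>x. v x \<noteq> 0" for u v :: "real^3 \<Rightarrow> real"
  proof -
    have "(\<lambda>y. u y * inverse (v y)) \<in> Alg" using that by (intro Alg.mult Alg.id Alg.inv)
    then show ?thesis by (simp add: divide_inverse)
  qed
  have GA: "G \<in> Alg" unfolding G_def[abs_def] using assms by (intro divA)
  have TA: "T \<in> Alg" unfolding T_def[abs_def] using assms by (intro divA)
  have RA: "R \<in> Alg" unfolding R_def[abs_def] using assms by (intro divA)
  have inv1: "G (mk a b c) = G (mk a' b c)" for a b c a'
    using line_const[OF GA, of 1 "mk a b c" "a' - a"] assms(7) unfolding G_def[abs_def] mk_1 by simp
  have inv2: "T (mk a b c) = T (mk a b' c)" for a b c b'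
    using line_const[OF TA, of 2 "mk a b c" "b' - b"] assms(8) unfolding T_def[abs_def] mk_2 by simp
  have inv3: "R (mk a b c) = R (mk a b c')" for a b c c'
    using line_const[OF RA, of 3 "mk a b c" "c' - c"] assms(9) unfolding R_def[abs_def] mk_3 by simp
  have Rnz: "R y \<noteq> 0" for y using nz unfolding R_def by simp
  have Tnz: "T y \<noteq> 0" for y using nz unfolding T_def by simp
  have GTR: "G y = T y / R y" for y using nz unfolding G_def T_def R_def by (simp add: field_simps)
  have K1: "T (mk p q r) * R (mk 0 0 0) = T (mk 0 0 r) * R (mk p 0 0)" for p q r
  proof -
    have "G (mk p 0 r) = G (mk 0 0 r)" by (rule inv1)
    then have "T (mk p 0 r) / R (mk p 0 0) = T (mk 0 0 r) / R (mk 0 0 0)"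
      using GTR inv3 by metis
    moreover have "T (mk p q r) = T (mk p 0 r)" by (rule inv2)
    ultimately show ?thesis using Rnz by (simp add: field_simps)
  qed
  have K2: "R (mk p q r) * R (mk 0 0 0) = R (mk p 0 0) * R (mk 0 q 0)" for p q r
  proof -
    have "G (mk p q r) = G (mk 0 q r)" by (rule inv1)
    then have "T (mk p q r) / R (mk p q 0) = T (mk 0 q r) / R (mk 0 q 0)"
      using GTR inv3 by metis
    moreover have "T (mk p q r) * R (mk 0 0 0) = T (mk 0 q r) * R (mk p 0 0)"
      using K1[of p q r] inv2[of 0 q r 0] by simp
    ultimately have "R (mk p q 0) * R (mk 0 0 0) = R (mk p 0 0) * R (mk 0 q 0)"
      using algK2 Rnz Tnz by blast
    then show ?thesis using inv3[of p q r 0] by simp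
  qed
  define c where "c = inverse (R (mk 0 0 0))"
  define f1 where "f1 s = a13 (s *\<^sub>R axis 1 1) * inverse (a23 (s *\<^sub>R axis 1 1)) * c" for s
  define f2 where "f2 s = a23 (s *\<^sub>R axis 2 1) * inverse (a13 (s *\<^sub>R axis 2 1))" for s
  define f3 where "f3 s = a23 (s *\<^sub>R axis 3 1) * inverse (a12 (s *\<^sub>R axis 3 1))" for s
  define \<phi> where "\<phi> x = a23 x * (a13 (x $ 2 *\<^sub>R axis 2 1) * inverse (a23 (x $ 2 *\<^sub>R axis 2 1)))
      * (a12 (x $ 3 *\<^sub>R axis 3 1) * inverse (a23 (x $ 3 *\<^sub>R axis 3 1)))" for x
  have s1: "smooth1 f1"
  proof -
    have "(\<lambda>y. a13 y * inverse (a23 y) * c) \<in> Alg" using assms by (intro Alg.mult Alg.id Alg.inv Alg.const)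
    from Alg_smooth1[OF this, of 1] show ?thesis unfolding f1_def[abs_def] .
  qed
  have s2: "smooth1 f2"
  proof -
    have "(\<lambda>y. a23 y * inverse (a13 y)) \<in> Alg" using assms by (intro Alg.mult Alg.id Alg.inv)
    from Alg_smooth1[OF this, of 2] show ?thesis unfolding f2_def[abs_def] .
  qed
  have s3: "smooth1 f3"
  proof -
    have "(\<lambda>y. a23 y * inverse (a12 y)) \<in> Alg" using assms by (intro Alg.mult Alg.id Alg.inv)
    from Alg_smooth1[OF this, of 3] show ?thesis unfolding f3_def[abs_def] .
  qed
  have sp: "smooth \<phi>"
  proof -
    have "\<phi> \<in> Alg" unfolding \<phi>_def[abs_def] using assms
      by (intro Alg.mult Alg.id Alg.gen Alg.invgen)
    then show ?thesis by (rule Alg_smooth)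
  qed
  have a12e: "a12 y = T y * a23 y" for y using nz unfolding T_def by simp
  have a13e: "a13 y = R y * a23 y" for y using nz unfolding R_def by simp
  have eqs: "a12 x = \<phi> x * f1 (x$1) * f2 (x$2) \<and> a13 x = \<phi> x * f1 (x$1) * f3 (x$3) \<and>
      a23 x = \<phi> x * f2 (x$2) * f3 (x$3)" for x
  proof -
    obtain p q r where x: "x = mk p q r" using mk_eq by blast
    have [simp]: "x $ 1 = p" "x $ 2 = q" "x $ 3 = r" unfolding x mk_def by (simp_all add: axis_def)
    have h1: "T (mk p q r) = T (mk 0 0 r) * R (mk p 0 0) * c"
      using K1[of p q r] Rnz unfolding c_def by (simp add: field_simps)
    have h2: "R (mk p q r) = R (mk p 0 0) * R (mk 0 q 0) * c"
      using K2[of p q r] Rnz unfolding c_def by (simp add: field_simps)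
    have E: "T (mk 0 0 r) * R (mk p 0 0) * c * a23 x = \<phi> x * f1 p * f2 q \<and>
        R (mk p 0 0) * R (mk 0 q 0) * c * a23 x = \<phi> x * f1 p * f3 r \<and> a23 x = \<phi> x * f2 q * f3 r"
      unfolding f1_def f2_def f3_def \<phi>_def mk_e1 mk_e2 mk_e3 a12e a13e
      by (simp only: \<open>x $ 2 = q\<close> \<open>x $ 3 = r\<close> mk_e2 mk_e3, rule algE) (use Rnz Tnz nz in auto)
    have hx: "T x = T (mk 0 0 r) * R (mk p 0 0) * c" "R x = R (mk p 0 0) * R (mk 0 q 0) * c"
      using h1 h2 x by simp_all
    show ?thesis unfolding a12e[of x] a13e[of x] hx \<open>x $ 1 = p\<close> \<open>x $ 2 = q\<close> \<open>x $ 3 = r\<close> by (rule E)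
  qed
  show ?thesis using s1 s2 s3 sp eqs by blast
qed

end
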